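(* The basin $\mathcal W^s(\mathcal B)$ contains the low temperature cylinder $\{(\phi,t)\in\mathcal C:\ t\le t_c\}\setminus\{\beta_c,\beta_c'\}$, where $\beta_c=(0,t_c)$ and $\beta_c'=(\pi,t_c)$.
   Context: $\mathcal C=(\mathbb R/2\pi\mathbb Z)\times[0,1]$ with coordinates $(\phi,t)$, $z=e^{i\phi}$, and $\mathcal R(z,t)=\big(\frac{z^2+t^2}{z^{-2}+t^2},\frac{z^2+z^{-2}+2}{z^2+z^{-2}+t^2+t^{-2}}\big)$, which maps $\mathcal C$ to itself (undefined only at $(\pm\pi/2,1)$). $\mathcal B=\{t=0\}$ is the bottom circle and $\mathcal W^s(\mathcal B)$ is the set of $x\in\mathcal C$ whose orbit is defined and converges to $\mathcal B$. $t_c\approx0.2956$ is the unique solution in $(0,1)$ of $(1+t^2)^2=4t$ (the repelling fixed point of $\mathcal R$ on $\{\phi=0\}$). *)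

theory Defs
  imports "HOL-Analysis.Analysis"
begin

text \<open>Points of the cylinder are encoded as pairs (z, t) with z = cis phi on the unit circle.\<close>

definition cyl :: "(complex \<times> real) set" where
  "cyl = {(z, t). cmod z = 1 \<and> 0 \<le> t \<and> t \<le> 1}"

text \<open>Indeterminacy points (+-pi/2, 1), i.e. z^2 = -1 and t = 1.\<close>
definition indet :: "(complex \<times> real) set" where
  "indet = {(z, t). t = 1 \<and> z\<^sup>2 = -1}"

text \<open>The second component is written with t^{-2} cleared
  (numerator and denominator multiplied by t^2), which is the continuous extension
  to the bottom circle t = 0; on |z| = 1 the quantity z^2 + z^{-2} is real.\<close>
definition Rmap :: "complex \<times> real \<Rightarrow> complex \<times> real" where
  "Rmap = (\<lambda>(z, t).
     ((z\<^sup>2 + complex_of_real (t\<^sup>2)) / (inverse (z\<^sup>2) + complex_of_real (t\<^sup>2)),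
      t\<^sup>2 * Re (z\<^sup>2 + inverse (z\<^sup>2) + 2)
        / (t\<^sup>2 * Re (z\<^sup>2 + inverse (z\<^sup>2)) + t ^ 4 + 1)))"

text \<open>Stable set of the bottom circle: orbit is defined (never hits indet) and
  the distance to B, i.e. the t-coordinate, tends to 0.\<close>
definition Ws_B :: "(complex \<times> real) set" where
  "Ws_B = {x \<in> cyl. (\<forall>n. (Rmap ^^ n) x \<notin> indet) \<and>
                     (\<lambda>n. snd ((Rmap ^^ n) x)) \<longlonglongrightarrow> 0}"

definition tc :: real where
  "tc = (THE t. 0 < t \<and> t < 1 \<and> (1 + t\<^sup>2)\<^sup>2 = 4 * t)"

end

theory Submission imports Defs begin


lemma real_key:
  fixes t a :: real
  assumes "0 \<le> t" "t < 1" "-1 \<le> a" "a \<le> 1"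
  shows "0 < 2*a*t^2 + t^4 + 1"
    "0 \<le> t^2*(2*a+2)/(2*a*t^2 + t^4 + 1)"
    "t^2*(2*a+2)/(2*a*t^2 + t^4 + 1) \<le> 4*t^2/(1+t^2)^2"
    "a < 1 \<Longrightarrow> 0 < t \<Longrightarrow> t^2*(2*a+2)/(2*a*t^2 + t^4 + 1) < 4*t^2/(1+t^2)^2"
proof -
  have t2: "t^2 < 1" using assms by (simp add: power_less_one_iff abs_if)
  have D: "2*a*t^2 + t^4 + 1 \<ge> (1-t^2)^2"
  proof -
    have "a*t^2 \<ge> (-1)*t^2" using assms by (intro mult_right_mono) auto
    hence "2*a*t^2 \<ge> -2*t^2" by linarith
    thus ?thesis by (simp add: power2_eq_square power4_eq_xxxx algebra_simps)
  qed
  have p: "(1-t^2)^2 > 0" using t2 by simp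
  show Dp: "0 < 2*a*t^2 + t^4 + 1" using D p by linarith
  show "0 \<le> t^2*(2*a+2)/(2*a*t^2 + t^4 + 1)" using Dp assms by auto
  have id: "4*t^2*(2*a*t^2 + t^4 + 1) - t^2*(2*a+2)*(1+t^2)^2 = 2*t^2*(1-a)*(1-t^2)^2"
    by (simp add: power2_eq_square power4_eq_xxxx algebra_simps)
  have q0: "1+t^2 > 0" by (simp add: add_pos_nonneg)
  have q: "(1+t^2)^2 > 0" "1+t^2 \<noteq> 0" using q0 by simp_all
  have "t^2*(2*a+2)*(1+t^2)^2 \<le> 4*t^2*(2*a*t^2 + t^4 + 1)"
  proof -
    have "0 \<le> 2*t^2*(1-a)*(1-t^2)^2" using assms by simp
    thus ?thesis using id by linarith
  qed
  thus "t^2*(2*a+2)/(2*a*t^2 + t^4 + 1) \<le> 4*t^2/(1+t^2)^2"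
    using Dp q(1) by (simp add: divide_simps)
  assume "a < 1" "0 < t"
  hence "0 < 2*t^2*(1-a)*(1-t^2)^2" using p by simp
  hence "t^2*(2*a+2)*(1+t^2)^2 < 4*t^2*(2*a*t^2 + t^4 + 1)" using id by linarith
  thus "t^2*(2*a+2)/(2*a*t^2 + t^4 + 1) < 4*t^2/(1+t^2)^2"
    using Dp q by (simp add: divide_simps)
qed

lemma mono_aux:
  fixes t u :: real
  assumes "0 \<le> t" "t \<le> u" "u \<le> 1/3"
  shows "4*t^2/(1+t^2)^2 \<le> t * (4*u/(1+u^2)^2)"
proof -
  have id: "u*(1+t^2)^2 - t*(1+u^2)^2 = (u-t)*(1 - 2*u*t - u*t*(u^2+u*t+t^2))"
    by (simp add: power2_eq_square algebra_simps)
  have st: "u*t \<le> 1/9" using mult_mono[of u "1/3" t "1/3"] assms by simp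
  have "u*u \<le> 1/9" using mult_mono[of u "1/3" u "1/3"] assms by simp
  moreover have "t*t \<le> 1/9" using mult_mono[of t "1/3" t "1/3"] assms by simp
  ultimately have S: "u^2+u*t+t^2 \<le> 1/3" using st by (simp add: power2_eq_square)
  have "u*t*(u^2+u*t+t^2) \<le> (1/9)*(1/3)"
    using mult_mono[OF st S] assms by simp
  hence "u*t*(u^2+u*t+t^2) \<le> 1/27" by simp
  hence "0 \<le> (u-t)*(1 - 2*u*t - u*t*(u^2+u*t+t^2))" using st assms by simp
  hence h: "t*(1+u^2)^2 \<le> u*(1+t^2)^2" using id by linarith
  have q0: "1+t^2 > 0" "1+u^2 > 0" by (simp_all add: add_pos_nonneg)
  have q: "(1+t^2)^2 > 0" "(1+u^2)^2 > 0" "1+t^2 \<noteq> 0" "1+u^2 \<noteq> 0" using q0 by simp_all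
  have "4*t^2*(1+u^2)^2 \<le> 4*t*u*(1+t^2)^2"
    using mult_left_mono[OF h, of "4*t"] assms by (simp add: power2_eq_square algebra_simps)
  thus ?thesis using q by (simp add: divide_simps algebra_simps)
qed

definition pp :: "real \<Rightarrow> real" where "pp t = t^3 + t^2 + 3*t - 1"

lemma pp_mono: "0 \<le> x \<Longrightarrow> x < y \<Longrightarrow> pp x < pp y"
proof -
  assume h: "0 \<le> x" "x < y"
  have "x^3 < y^3" by (rule power_strict_mono[OF h(2) h(1)]) simp
  moreover have "x^2 < y^2" by (rule power_strict_mono[OF h(2) h(1)]) simp
  ultimately show ?thesis using h unfolding pp_def by linarith
qed

lemma tc_props: "0 < tc" "tc < 1/3" "(1 + tc^2)^2 = 4*tc"
  "\<And>t. 0 \<le> t \<Longrightarrow> t < tc \<Longrightarrow> 4*t < (1+t^2)^2"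
proof -
  have fact: "\<And>t::real. (1+t^2)^2 - 4*t = (t-1) * pp t"
    by (simp add: pp_def power2_eq_square power3_eq_cube algebra_simps)
  have "\<exists>x\<ge>0. x \<le> 1 \<and> pp x = 0"
    by (rule IVT') (auto simp: pp_def intro!: continuous_intros)
  then obtain r where r: "0 \<le> r" "r \<le> 1" "pp r = 0" by blast
  have r0: "r \<noteq> 0" proof assume "r = 0" thus False using r(3) by (simp add: pp_def) qed
  have r3: "r < 1/3"
  proof -
    have "r > 0" using r r0 by simp
    hence "r^3 + r^2 > 0" by (intro add_pos_pos) simp_all
    thus ?thesis using r(3) by (simp add: pp_def)
  qed
  have P: "0 < r \<and> r < 1 \<and> (1 + r^2)^2 = 4 * r" using fact[of r] r r0 r3 by simp
  have U: "y = r" if "0 < y \<and> y < 1 \<and> (1 + y^2)^2 = 4 * y" for y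
  proof -
    have "pp y = 0" using fact[of y] that by simp
    show ?thesis
    proof (rule ccontr)
      assume "y \<noteq> r"
      hence "y < r \<or> r < y" by linarith
      thus False using pp_mono[of y r] pp_mono[of r y] r that \<open>pp y = 0\<close> by auto
    qed
  qed
  have "tc = r" unfolding tc_def using P U by (intro the_equality) blast+ 
  thus "0 < tc" "tc < 1/3" "(1 + tc^2)^2 = 4*tc" using P r3 by auto
  fix t :: real assume t: "0 \<le> t" "t < tc"
  have "pp t < 0" using pp_mono[OF t(1), of r] t \<open>tc = r\<close> r by simp
  moreover have "t - 1 < 0" using t \<open>tc = r\<close> r3 by simp
  ultimately have "0 < (t-1) * pp t" by (simp add: mult_neg_neg)
  thus "4*t < (1+t^2)^2" using fact[of t] by linarith
qed


lemma Rmap_step: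
  assumes z: "cmod z = 1" and t: "0 \<le> t" "t < 1"
  shows "cmod (fst (Rmap (z,t))) = 1" "0 \<le> snd (Rmap (z,t))"
    "snd (Rmap (z,t)) \<le> 4*t^2/(1+t^2)^2"
    "z \<noteq> 1 \<Longrightarrow> z \<noteq> -1 \<Longrightarrow> 0 < t \<Longrightarrow> snd (Rmap (z,t)) < 4*t^2/(1+t^2)^2"
proof -
  define w where "w = z^2"
  have w: "cmod w = 1" using z by (simp add: w_def norm_power)
  have inv: "inverse w = cnj w"
    using w by (simp add: inverse_eq_divide complex_div_cnj[of 1 w] )
  have a: "-1 \<le> Re w" "Re w \<le> 1" using abs_Re_le_cmod[of w] w by auto
  have S0: "snd (Rmap (z,t)) = t^2 * Re (w + inverse w + 2) / (t^2 * Re (w + inverse w) + t^4 + 1)"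
    by (simp add: Rmap_def w_def)
  have S: "snd (Rmap (z,t)) = t^2*(2*Re w+2)/(2*Re w*t^2 + t^4 + 1)"
    unfolding S0 inv by (simp add: algebra_simps)
  show "0 \<le> snd (Rmap (z,t))" "snd (Rmap (z,t)) \<le> 4*t^2/(1+t^2)^2"
    unfolding S using real_key(2,3)[OF t a] by auto
  have ne: "w + complex_of_real (t^2) \<noteq> 0"
  proof
    assume "w + complex_of_real (t^2) = 0"
    hence "w = - complex_of_real (t^2)" by (simp add: eq_neg_iff_add_eq_0)
    hence "cmod w = t^2" by (simp add: norm_power)
    hence "t^2 = 1" using w by simp
    moreover have "t^2 < 1" using t by (simp add: power_less_one_iff abs_if)
    ultimately show False by simp
  qed
  have F: "fst (Rmap (z,t)) = (w + complex_of_real (t^2)) / cnj (w + complex_of_real (t^2))"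
  proof -
    have "fst (Rmap (z,t)) = (w + complex_of_real (t^2)) / (inverse w + complex_of_real (t^2))"
      by (simp add: Rmap_def w_def)
    thus ?thesis unfolding inv by simp
  qed
  have E: "cnj w + complex_of_real (t^2) = cnj (w + complex_of_real (t^2))" by simp
  have "cmod (fst (Rmap (z,t))) = cmod (w + complex_of_real (t^2)) / cmod (cnj (w + complex_of_real (t^2)))"
    unfolding F E norm_divide ..
  thus "cmod (fst (Rmap (z,t))) = 1" using ne by (simp only: complex_mod_cnj) simp
  assume h: "z \<noteq> 1" "z \<noteq> -1" "0 < t"
  have "w \<noteq> 1"
  proof
    assume "w = 1"
    hence "(z-1)*(z+1) = 0" by (simp add: w_def power2_eq_square algebra_simps)
    hence "z - 1 = 0 \<or> z + 1 = 0" by (simp only: mult_eq_0_iff)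
    hence "z = 1 \<or> z = -1" by (metis add_diff_cancel_right' diff_0 eq_iff_diff_eq_0)
    thus False using h by blast
  qed
  have "Re w < 1"
  proof (rule ccontr)
    assume "\<not> Re w < 1"
    hence "Re w = 1" using a by simp
    hence "(Im w)^2 = 0" using w unfolding cmod_def by (simp add: power2_eq_square)
    hence "w = 1" using \<open>Re w = 1\<close> by (simp add: complex_eq_iff)
    thus False using \<open>w \<noteq> 1\<close> by simp
  qed
  then show "snd (Rmap (z,t)) < 4*t^2/(1+t^2)^2"
    unfolding S using h(3) by (intro real_key(4)[OF t a])
qed


lemma below_tc:
  assumes z: "cmod z = 1" and t: "0 \<le> t" "t < tc"
  shows "(z,t) \<in> Ws_B"
proof -
  define q where "q = 4*t/(1+t^2)^2"
  have q0: "0 \<le> q" using t by (simp add: q_def)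
  have q1: "q < 1" using tc_props(4)[OF t] unfolding q_def
    by (simp add: divide_simps add_pos_nonneg)
  have tc3: "tc < 1/3" by (rule tc_props(2))
  have I: "(Rmap^^n) (z,t) \<in> cyl \<and> snd ((Rmap^^n) (z,t)) \<le> q^n * t" for n
  proof (induction n)
    case 0 then show ?case using z t tc3 by (simp add: cyl_def)
  next
    case (Suc n)
    obtain z' t' where e: "(Rmap^^n) (z,t) = (z',t')" by fastforce
    have z': "cmod z' = 1" and t': "0 \<le> t'" "t' \<le> q^n * t" using Suc e by (auto simp: cyl_def)
    have qn: "q^n \<le> 1" using q0 q1 by (simp add: power_le_one)
    have "q^n * t \<le> t" using qn t q0 by (simp add: mult_left_le_one_le)
    hence t'1: "t' < 1" "t' \<le> t" using t' t tc3 by auto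
    have "snd (Rmap (z',t')) \<le> 4*t'^2/(1+t'^2)^2" by (rule Rmap_step(3)[OF z' t'(1) t'1(1)])
    also have "\<dots> \<le> t' * q" unfolding q_def using mono_aux[OF t'(1) t'1(2)] t tc3 by simp
    also have "\<dots> \<le> q^n * t * q" using t' q0 by (simp add: mult_right_mono)
    finally have B: "snd (Rmap (z',t')) \<le> q^Suc n * t" by (simp add: algebra_simps)
    have "Rmap (z',t') \<in> cyl"
    proof -
      have "q^Suc n \<le> 1" using q0 q1 by (simp only: power_le_one)
      hence "q^Suc n * t \<le> t" using t q0 by (simp add: mult_left_le_one_le)
      hence "snd (Rmap (z',t')) \<le> 1" using B t tc3 by linarith
      thus ?thesis using Rmap_step(1,2)[OF z' t'(1) t'1(1)] unfolding cyl_def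
        by (cases "Rmap (z',t')") auto
    qed
    thus ?case using B e by simp
  qed
  have nind: "(Rmap^^n) (z,t) \<notin> indet" for n
  proof -
    have "q^n \<le> 1" using q0 q1 by (simp add: power_le_one)
    hence "q^n * t \<le> t" using t q0 by (simp add: mult_left_le_one_le)
    hence "snd ((Rmap^^n) (z,t)) \<le> t" using I[of n] by linarith
    thus ?thesis using t tc3 by (auto simp: indet_def)
  qed
  have L: "(\<lambda>n. q^n * t) \<longlonglongrightarrow> 0"
    using LIMSEQ_power_zero[of q] q0 q1 by (intro tendsto_mult_left_zero) simp
  have "(\<lambda>n. snd ((Rmap ^^ n) (z,t))) \<longlonglongrightarrow> 0"
  proof (rule tendsto_sandwich[OF _ _ tendsto_const L])
    have "0 \<le> snd ((Rmap^^n)(z,t))" for n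
      using I[of n] by (cases "(Rmap^^n)(z,t)") (auto simp: cyl_def)
    thus "\<forall>\<^sub>F n in sequentially. 0 \<le> snd ((Rmap ^^ n) (z, t))" by simp
    show "\<forall>\<^sub>F n in sequentially. snd ((Rmap ^^ n) (z, t)) \<le> q^n * t" using I by simp
  qed
  thus ?thesis using nind I[of 0] unfolding Ws_B_def by auto
qed


lemma Ws_B_pre:
  assumes "x \<in> cyl" "snd x < 1" "Rmap x \<in> Ws_B"
  shows "x \<in> Ws_B"
proof -
  have sh: "(Rmap^^Suc n) x = (Rmap^^n) (Rmap x)" for n by (simp only: funpow_Suc_right comp_apply)
  have "(Rmap^^n) x \<notin> indet" for n
  proof (cases n)
    case 0 thus ?thesis using assms(2) by (cases x) (auto simp: indet_def)
  next
    case (Suc m) thus ?thesis using assms(3) sh[of m] by (auto simp: Ws_B_def)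
  qed
  moreover have "(\<lambda>n. snd ((Rmap ^^ Suc n) x)) \<longlonglongrightarrow> 0"
    unfolding sh using assms(3) by (simp add: Ws_B_def)
  hence "(\<lambda>n. snd ((Rmap ^^ n) x)) \<longlonglongrightarrow> 0" by (rule LIMSEQ_imp_Suc)
  ultimately show ?thesis using assms(1) by (simp add: Ws_B_def)
qed

theorem lemma9p1:
  shows "{(cis phi, t) | phi t. 0 \<le> t \<and> t \<le> tc} - {(cis 0, tc), (cis pi, tc)} \<subseteq> Ws_B"
proof
  fix x assume "x \<in> {(cis phi, t) | phi t. 0 \<le> t \<and> t \<le> tc} - {(cis 0, tc), (cis pi, tc)}"
  then obtain phi t where x: "x = (cis phi, t)" "0 \<le> t" "t \<le> tc" and ne: "x \<noteq> (1, tc)" "x \<noteq> (-1, tc)"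
    by auto
  have tc3: "tc < 1/3" "0 < tc" by (rule tc_props)+
  have z: "cmod (cis phi) = 1" by simp
  show "x \<in> Ws_B"
  proof (cases "t < tc")
    case True thus ?thesis using below_tc[OF z x(2) True] x by simp
  next
    case False
    hence tt: "t = tc" using x by simp
    have n1: "cis phi \<noteq> 1" "cis phi \<noteq> -1" using ne x tt by auto
    have t1: "0 \<le> t" "t < 1" using x tt tc3 by auto
    have "4*tc^2/(1+tc^2)^2 = tc" using tc_props(3) tc3 by (simp add: power2_eq_square)
    hence lt: "snd (Rmap (cis phi, t)) < tc"
      using Rmap_step(4)[OF z t1 n1] tt tc3 by simp
    obtain z' t' where e: "Rmap (cis phi, t) = (z', t')" by fastforce
    have "Rmap (cis phi, t) \<in> Ws_B" unfolding e
      by (rule below_tc) (use Rmap_step(1,2)[OF z t1] lt e in auto)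
    moreover have "x \<in> cyl" using x tt tc3 by (simp add: cyl_def)
    ultimately show ?thesis using Ws_B_pre[of x] x t1 by simp
  qed
qed

end
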